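(* Consider a QRW on the non-negative integers with non trivial coins. All local states of the walk are transient if and only if the state $|0\rangle\otimes|\uparrow\rangle$ is transient.
   Context: Coins: for each $i\ge0$, $C_i=(c^i_{kl})_{k,l=1,2}$ is a $2\times2$ unitary matrix with $c^i_{11}\ne0$ (non trivial). Number the pure states $|0\uparrow\rangle,|0\downarrow\rangle,|1\uparrow\rangle,|1\downarrow\rangle,\dots$ as $0,1,2,3,\dots$. The unitary transition matrix $U=(U_{j,k})$ ($U_{j,k}$ = one-step amplitude from state $j$ to state $k$) has only the non-zero entries $U_{2i,2i+2}=c^i_{11}$, $U_{2i+1,2i+2}=c^i_{12}$ ($i\ge0$), $U_{2i,2i-1}=c^i_{21}$, $U_{2i+1,2i-1}=c^i_{22}$ ($i\ge1$), $U_{0,0}=c^0_{21}$, $U_{1,0}=c^0_{22}$. A state is a unit row vector $\psi\in\ell^2$; it is recurrent if $\sum_{n\ge1}|\psi U^n\psi^\dagger|^2=\infty$ and transient otherwise. A local state is a state that is a superposition of finitely many pure states (finitely many nonzero components). *)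

theory Defs
  imports "HOL-Analysis.Analysis"
begin

text \<open>Coins: \<open>C i k l\<close> is the entry \<open>c^i_{kl}\<close> (indices k,l in {1,2}) of the i-th coin.\<close>

definition unitary2 :: "(nat \<Rightarrow> nat \<Rightarrow> complex) \<Rightarrow> bool" where
  "unitary2 M \<longleftrightarrow>
     (\<forall>k\<in>{1,2}. \<forall>l\<in>{1,2}. (\<Sum>m\<in>{1,2}. M k m * cnj (M l m)) = (if k = l then 1 else 0)) \<and>
     (\<forall>k\<in>{1,2}. \<forall>l\<in>{1,2}. (\<Sum>m\<in>{1,2}. cnj (M m k) * M m l) = (if k = l then 1 else 0))"

definition coins :: "(nat \<Rightarrow> nat \<Rightarrow> nat \<Rightarrow> complex) \<Rightarrow> bool" where
  "coins C \<longleftrightarrow> (\<forall>i. unitary2 (C i))"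

definition nontrivial_coins :: "(nat \<Rightarrow> nat \<Rightarrow> nat \<Rightarrow> complex) \<Rightarrow> bool" where
  "nontrivial_coins C \<longleftrightarrow> (\<forall>i. C i 1 1 \<noteq> 0)"

text \<open>Transition matrix: \<open>qrwU C j k\<close> is the one-step amplitude from state j to state k;
  pure state \<open>|i up>\<close> is 2i, \<open>|i down>\<close> is 2i+1.\<close>
definition qrwU :: "(nat \<Rightarrow> nat \<Rightarrow> nat \<Rightarrow> complex) \<Rightarrow> nat \<Rightarrow> nat \<Rightarrow> complex" where
  "qrwU C j k =
     (let i = j div 2 in
      if even j then
        (if k = j + 2 then C i 1 1
         else if i \<ge> 1 \<and> k = j - 1 then C i 2 1
         else if i = 0 \<and> k = 0 then C 0 2 1
         else 0)
      else
        (if k = j + 1 then C i 1 2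
         else if i \<ge> 1 \<and> k = j - 2 then C i 2 2
         else if i = 0 \<and> k = 0 then C 0 2 2
         else 0))"

definition qrw_step :: "(nat \<Rightarrow> nat \<Rightarrow> nat \<Rightarrow> complex) \<Rightarrow> (nat \<Rightarrow> complex) \<Rightarrow> nat \<Rightarrow> complex" where
  "qrw_step C \<psi> k = (\<Sum>\<^sub>\<infinity>j. \<psi> j * qrwU C j k)"

definition qrw_pow :: "(nat \<Rightarrow> nat \<Rightarrow> nat \<Rightarrow> complex) \<Rightarrow> nat \<Rightarrow> (nat \<Rightarrow> complex) \<Rightarrow> nat \<Rightarrow> complex" where
  "qrw_pow C n \<psi> = (qrw_step C ^^ n) \<psi>"

definition amp :: "(nat \<Rightarrow> nat \<Rightarrow> nat \<Rightarrow> complex) \<Rightarrow> (nat \<Rightarrow> complex) \<Rightarrow> nat \<Rightarrow> complex" where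
  "amp C \<psi> n = (\<Sum>\<^sub>\<infinity>k. qrw_pow C n \<psi> k * cnj (\<psi> k))"

definition is_state :: "(nat \<Rightarrow> complex) \<Rightarrow> bool" where
  "is_state \<psi> \<longleftrightarrow> (\<lambda>k. (norm (\<psi> k))\<^sup>2) summable_on UNIV \<and> (\<Sum>\<^sub>\<infinity>k. (norm (\<psi> k))\<^sup>2) = 1"

definition local_state :: "(nat \<Rightarrow> complex) \<Rightarrow> bool" where
  "local_state \<psi> \<longleftrightarrow> is_state \<psi> \<and> finite {k. \<psi> k \<noteq> 0}"

text \<open>Recurrent: \<open>\<Sum>_{n\<ge>1} |\<psi> U^n \<psi>^\<dagger>|^2 = \<infinity>\<close> (terms are nonnegative).\<close>
definition recurrent :: "(nat \<Rightarrow> nat \<Rightarrow> nat \<Rightarrow> complex) \<Rightarrow> (nat \<Rightarrow> complex) \<Rightarrow> bool" where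
  "recurrent C \<psi> \<longleftrightarrow> \<not> summable (\<lambda>n. (norm (amp C \<psi> (Suc n)))\<^sup>2)"

definition transient :: "(nat \<Rightarrow> nat \<Rightarrow> nat \<Rightarrow> complex) \<Rightarrow> (nat \<Rightarrow> complex) \<Rightarrow> bool" where
  "transient C \<psi> \<longleftrightarrow> \<not> recurrent C \<psi>"

definition e0 :: "nat \<Rightarrow> complex" where
  "e0 k = (if k = 0 then 1 else 0)"

end

theory Submission
  imports Defs
begin

lemma infsum_fin:
  fixes f :: "nat \<Rightarrow> 'b::{comm_monoid_add,t2_space}"
  assumes "finite A" "\<And>k. k \<notin> A \<Longrightarrow> f k = 0"
  shows "infsum f UNIV = sum f A"
proof -
  have "infsum f UNIV = infsum f A"
    by (rule infsum_cong_neutral) (use assms in auto)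
  then show ?thesis using assms(1) by simp
qed

definition Ai :: "nat \<Rightarrow> nat" where "Ai j = 2*(j div 2) + 2"
definition Bi :: "nat \<Rightarrow> nat" where "Bi j = (if j div 2 \<ge> 1 then 2*(j div 2) - 1 else 0)"
definition colj :: "nat \<Rightarrow> nat" where "colj j = (if even j then 1 else 2)"

lemma AB_ne: "Ai j \<noteq> Bi j"
  unfolding Ai_def Bi_def by auto

lemma AB_gen: "Ai j \<noteq> Bi l"
proof -
  have "odd (Bi l) \<or> Bi l = 0" unfolding Bi_def by auto
  moreover have "even (Ai j)" "Ai j \<noteq> 0" unfolding Ai_def by auto
  ultimately show ?thesis by auto
qed

lemma U_form: "qrwU C j k = (if k = Ai j then C (j div 2) 1 (colj j)
   else if k = Bi j then C (j div 2) 2 (colj j) else 0)"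
proof (cases "even j")
  case True
  then obtain i where j: "j = 2*i" by blast
  show ?thesis unfolding qrwU_def Ai_def Bi_def colj_def j Let_def by (cases "i=0") auto
next
  case False
  then obtain i where j: "j = 2*i+1" using oddE by blast
  show ?thesis unfolding qrwU_def Ai_def Bi_def colj_def j Let_def by (cases "i=0") auto
qed

lemma U_nz: "qrwU C j k \<noteq> 0 \<Longrightarrow> j \<le> k + 2"
  unfolding U_form Ai_def Bi_def by (auto split: if_splits)

lemma step_sum: "qrw_step C x k = (\<Sum>j\<le>k+2. x j * qrwU C j k)"
  unfolding qrw_step_def
  by (rule infsum_fin) (use U_nz in force)+

lemma U_nz2: "qrwU C j k \<noteq> 0 \<Longrightarrow> k \<le> j + 2"
  unfolding U_form Ai_def Bi_def by (auto split: if_splits)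

definition bnd :: "nat \<Rightarrow> (nat \<Rightarrow> complex) \<Rightarrow> bool" where
  "bnd B x \<longleftrightarrow> (\<forall>k>B. x k = 0)"

lemma step_add: "qrw_step C (\<lambda>k. x k + y k) = (\<lambda>k. qrw_step C x k + qrw_step C y k)"
  by (rule ext) (simp add: step_sum distrib_right sum.distrib)

lemma step_scale: "qrw_step C (\<lambda>k. c * x k) = (\<lambda>k. c * qrw_step C x k)"
  unfolding step_sum by (rule ext) (simp only: sum_distrib_left mult.assoc)

lemma pow_Suc: "qrw_pow C (Suc n) x = qrw_step C (qrw_pow C n x)"
  unfolding qrw_pow_def by simp

lemma pow_Suc': "qrw_pow C (Suc n) x = qrw_pow C n (qrw_step C x)"
  unfolding qrw_pow_def by (simp add: funpow_Suc_right del: funpow.simps)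

lemma pow_0: "qrw_pow C 0 x = x"
  unfolding qrw_pow_def by simp

lemma pow_add_exp: "qrw_pow C (m + n) x = qrw_pow C m (qrw_pow C n x)"
  unfolding qrw_pow_def by (simp add: funpow_add)

lemma pow_add: "qrw_pow C n (\<lambda>k. x k + y k) = (\<lambda>k. qrw_pow C n x k + qrw_pow C n y k)"
  by (induction n) (simp_all add: pow_0 pow_Suc step_add)

lemma pow_scale: "qrw_pow C n (\<lambda>k. c * x k) = (\<lambda>k. c * qrw_pow C n x k)"
  by (induction n) (simp_all add: pow_0 pow_Suc step_scale)

lemma step_sum_bnd: "bnd B x \<Longrightarrow> qrw_step C x k = (\<Sum>j\<le>B. x j * qrwU C j k)"
  unfolding qrw_step_def
  by (rule infsum_fin) (auto simp: bnd_def not_le)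

lemma step_bnd: "bnd B x \<Longrightarrow> bnd (B+2) (qrw_step C x)"
proof -
  assume b: "bnd B x"
  show ?thesis unfolding bnd_def
  proof (intro allI impI)
    fix k assume k: "k > B + 2"
    have z: "x j * qrwU C j k = 0" if "j \<le> B" for j
      using U_nz2[of C j k] that k by auto
    show "qrw_step C x k = 0" unfolding step_sum_bnd[OF b]
      by (rule sum.neutral) (use z in auto)
  qed
qed

lemma pow_bnd: "bnd B x \<Longrightarrow> bnd (B + 2*n) (qrw_pow C n x)"
proof (induction n)
  case 0 then show ?case by (simp add: pow_0)
next
  case (Suc n)
  then show ?case using step_bnd[of "B+2*n" "qrw_pow C n x" C] by (simp add: pow_Suc)
qed

definition ip :: "(nat \<Rightarrow> complex) \<Rightarrow> (nat \<Rightarrow> complex) \<Rightarrow> complex" where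
  "ip x y = infsum (\<lambda>k. x k * cnj (y k)) UNIV"

lemma amp_ip: "amp C \<psi> n = ip (qrw_pow C n \<psi>) \<psi>"
  unfolding amp_def ip_def ..

lemma ip_bnd1: "bnd B x \<Longrightarrow> ip x y = (\<Sum>k\<le>B. x k * cnj (y k))"
  unfolding ip_def by (rule infsum_fin) (auto simp: bnd_def not_le)

lemma ip_bnd2: "bnd B y \<Longrightarrow> ip x y = (\<Sum>k\<le>B. x k * cnj (y k))"
  unfolding ip_def by (rule infsum_fin) (auto simp: bnd_def not_le)

lemma bnd_mono: "bnd B x \<Longrightarrow> B \<le> B' \<Longrightarrow> bnd B' x"
  unfolding bnd_def by auto

lemma sum_two:
  assumes "finite K" "A \<in> K" "B \<in> K" "A \<noteq> B"
  shows "(\<Sum>k\<in>K. (if k = A then a else if k = B then b else 0)) = (a::complex) + b"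
proof -
  have "(\<Sum>k\<in>K. (if k = A then a else if k = B then b else 0))
       = (\<Sum>k\<in>K. (if k = A then a else 0) + (if k = B then b else 0))"
    by (rule sum.cong) (use assms in auto)
  also have "\<dots> = a + b" using assms by (simp add: sum.distrib)
  finally show ?thesis .
qed

lemma row_orth:
  assumes co: "coins C" and K: "finite K" "{Ai j, Bi j, Ai l, Bi l} \<subseteq> K"
  shows "(\<Sum>k\<in>K. qrwU C j k * cnj (qrwU C l k)) = (if j = l then 1 else 0)"
proof (cases "j div 2 = l div 2")
  case False
  have ne1: "Ai j \<noteq> Ai l" "Bi j \<noteq> Bi l"
    using False unfolding Ai_def Bi_def by (auto split: if_splits)
  note ne = ne1 AB_gen[of j l] AB_gen[of l j]
  have "(\<Sum>k\<in>K. qrwU C j k * cnj (qrwU C l k)) = 0"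
    by (rule sum.neutral) (use ne in \<open>auto simp: U_form\<close>)
  then show ?thesis using False by auto
next
  case True
  define i where "i = j div 2"
  have eA: "Ai l = Ai j" and eB: "Bi l = Bi j" using True unfolding Ai_def Bi_def by auto
  have "(\<Sum>k\<in>K. qrwU C j k * cnj (qrwU C l k))
      = (\<Sum>k\<in>K. (if k = Ai j then C i 1 (colj j) * cnj (C i 1 (colj l))
                  else if k = Bi j then C i 2 (colj j) * cnj (C i 2 (colj l)) else 0))"
    by (rule sum.cong) (use True AB_ne[of j] in \<open>auto simp: U_form eA eB i_def\<close>)
  also have "\<dots> = C i 1 (colj j) * cnj (C i 1 (colj l)) + C i 2 (colj j) * cnj (C i 2 (colj l))"
    by (rule sum_two) (use K AB_ne[of j] in auto)
  also have "\<dots> = (\<Sum>m\<in>{1,2}. cnj (C i m (colj l)) * C i m (colj j))"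
    by (simp add: mult.commute)
  also have "\<dots> = (if colj l = colj j then 1 else 0)"
    using co unfolding coins_def unitary2_def colj_def by auto
  also have "\<dots> = (if j = l then 1 else 0)"
  proof -
    have "colj l = colj j \<longleftrightarrow> j = l"
    proof -
      have m: "colj l = colj j \<longleftrightarrow> j mod 2 = l mod 2"
        unfolding colj_def by (auto simp: even_iff_mod_2_eq_zero odd_iff_mod_2_eq_one)
      have "j = 2*(j div 2) + j mod 2" "l = 2*(l div 2) + l mod 2" by simp_all
      then show ?thesis unfolding m using True by metis
    qed
    then show ?thesis by simp
  qed
  finally show ?thesis .
qed

lemma isom:
  assumes co: "coins C" and bx: "bnd B x" and "bnd B y"
  shows "ip (qrw_step C x) (qrw_step C y) = ip x y"
proof -
  have "ip (qrw_step C x) (qrw_step C y) = (\<Sum>k\<le>B+2. qrw_step C x k * cnj (qrw_step C y k))"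
    by (rule ip_bnd1[OF step_bnd[OF bx]])
  also have "\<dots> = (\<Sum>k\<le>B+2. \<Sum>j\<le>B. \<Sum>l\<le>B. x j * cnj (y l) * (qrwU C j k * cnj (qrwU C l k)))"
    by (simp add: step_sum_bnd[OF bx] step_sum_bnd[OF assms(3)] sum_product mult_ac)
  also have "\<dots> = (\<Sum>j\<le>B. \<Sum>l\<le>B. \<Sum>k\<le>B+2. x j * cnj (y l) * (qrwU C j k * cnj (qrwU C l k)))"
    by (subst sum.swap, rule sum.cong[OF refl], rule sum.swap)
  also have "\<dots> = (\<Sum>j\<le>B. \<Sum>l\<le>B. x j * cnj (y l) * (if j = l then 1 else 0))"
  proof (intro sum.cong refl)
    fix j l assume j: "j \<in> {..B}" and l: "l \<in> {..B}"
    have sub: "{Ai j, Bi j, Ai l, Bi l} \<subseteq> {..B+2}"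
      using j l unfolding Ai_def Bi_def by auto
    show "(\<Sum>k\<le>B+2. x j * cnj (y l) * (qrwU C j k * cnj (qrwU C l k)))
       = x j * cnj (y l) * (if j = l then 1 else 0)"
      using row_orth[OF co _ sub] by (simp add: sum_distrib_left[symmetric])
  qed
  also have "\<dots> = (\<Sum>j\<le>B. x j * cnj (y j))"
    by (simp add: if_distrib cong: if_cong)
  also have "\<dots> = ip x y" by (rule ip_bnd1[OF bx, symmetric])
  finally show ?thesis .
qed

lemma pow_isom:
  assumes co: "coins C" and "bnd B x" "bnd B y"
  shows "ip (qrw_pow C n x) (qrw_pow C n y) = ip x y"
  using assms(2,3)
proof (induction n arbitrary: x y B)
  case 0 then show ?case by (simp add: pow_0)
next
  case (Suc n)
  have "ip (qrw_pow C (Suc n) x) (qrw_pow C (Suc n) y) = ip (qrw_pow C n (qrw_step C x)) (qrw_pow C n (qrw_step C y))"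
    by (simp add: pow_Suc')
  also have "\<dots> = ip (qrw_step C x) (qrw_step C y)"
    by (rule Suc.IH[OF step_bnd[OF Suc.prems(1)] step_bnd[OF Suc.prems(2)]])
  also have "\<dots> = ip x y" by (rule isom[OF co Suc.prems])
  finally show ?case .
qed

lemma ip_add1: "bnd B z \<Longrightarrow> ip (\<lambda>k. x k + y k) z = ip x z + ip y z"
  by (simp add: ip_bnd2 distrib_right sum.distrib)

lemma ip_scale1: "bnd B z \<Longrightarrow> ip (\<lambda>k. c * x k) z = c * ip x z"
  by (simp add: ip_bnd2 sum_distrib_left mult.assoc)

lemma ip_add2: "bnd B x \<Longrightarrow> ip x (\<lambda>k. y k + z k) = ip x y + ip x z"
  by (simp add: ip_bnd1 distrib_left sum.distrib)

lemma ip_scale2: "bnd B x \<Longrightarrow> ip x (\<lambda>k. c * y k) = cnj c * ip x y"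
  by (simp add: ip_bnd1 sum_distrib_left mult_ac)

lemma sq_add:
  assumes "summable (\<lambda>n. (norm (a n))\<^sup>2)" "summable (\<lambda>n. (norm (b n))\<^sup>2)"
  shows "summable (\<lambda>n. (norm (a n + b n :: complex))\<^sup>2)"
proof (rule summable_comparison_test')
  show "summable (\<lambda>n. 2 * (norm (a n))\<^sup>2 + 2 * (norm (b n))\<^sup>2)"
    using assms by (intro summable_add summable_mult)
  fix n :: nat
  have "norm (a n + b n) \<le> norm (a n) + norm (b n)" by (rule norm_triangle_ineq)
  then have "(norm (a n + b n))\<^sup>2 \<le> (norm (a n) + norm (b n))\<^sup>2"
    by (simp add: power_mono)
  also have "\<dots> \<le> 2 * (norm (a n))\<^sup>2 + 2 * (norm (b n))\<^sup>2"
    by (smt (verit, ccfv_SIG) power2_sum sum_squares_bound)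
  finally show "norm ((norm (a n + b n))\<^sup>2) \<le> 2 * (norm (a n))\<^sup>2 + 2 * (norm (b n))\<^sup>2"
    by simp
qed

lemma sq_scale:
  assumes "summable (\<lambda>n. (norm (a n))\<^sup>2)"
  shows "summable (\<lambda>n. (norm (c * a n :: complex))\<^sup>2)"
  using summable_mult[OF assms, of "(norm c)\<^sup>2"] by (simp add: norm_mult power_mult_distrib)

inductive inV :: "(nat \<Rightarrow> nat \<Rightarrow> nat \<Rightarrow> complex) \<Rightarrow> (nat \<Rightarrow> complex) \<Rightarrow> bool" for C where
  base: "inV C (qrw_pow C m e0)"
| add: "inV C f \<Longrightarrow> inV C g \<Longrightarrow> inV C (\<lambda>k. f k + g k)"
| scale: "inV C f \<Longrightarrow> inV C (\<lambda>k. c * f k)"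

lemma e0_bnd: "bnd 0 e0" unfolding bnd_def e0_def by auto

lemma inV_bnd: "inV C f \<Longrightarrow> \<exists>B. bnd B f"
proof (induction rule: inV.induct)
  case (base m) then show ?case using pow_bnd[OF e0_bnd] by blast
next
  case (add f g)
  then obtain B1 B2 where "bnd B1 f" "bnd B2 g" by blast
  then have "bnd (max B1 B2) f" "bnd (max B1 B2) g" by (auto intro: bnd_mono)
  then have "bnd (max B1 B2) (\<lambda>k. f k + g k)" unfolding bnd_def by auto
  then show ?case by blast
next
  case (scale f c) then show ?case unfolding bnd_def by auto
qed

lemma inV_pow: "inV C f \<Longrightarrow> inV C (qrw_pow C n f)"
proof (induction rule: inV.induct)
  case (base m) then show ?case using inV.base[of C "n+m"] by (simp add: pow_add_exp)
next
  case (add f g) then show ?case by (simp add: pow_add inV.add)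
next
  case (scale f c) then show ?case by (simp add: pow_scale inV.scale)
qed

lemma base_summ:
  assumes co: "coins C" and H: "summable (\<lambda>n. (norm (amp C e0 (Suc n)))\<^sup>2)"
  shows "summable (\<lambda>n. (norm (ip (qrw_pow C n (qrw_pow C m e0)) (qrw_pow C l e0)))\<^sup>2)"
proof -
  define t where "t n = (norm (amp C e0 (n + m - l)))\<^sup>2" for n
  have "summable (\<lambda>n. t (n + (l+1)))"
    using H summable_iff_shift[of "\<lambda>n. (norm (amp C e0 (Suc n)))\<^sup>2" m]
    unfolding t_def by (simp add: add.commute)
  then have st: "summable t" by (rule summable_iff_shift[THEN iffD1])
  have ev: "\<forall>\<^sub>F n in sequentially. (norm (ip (qrw_pow C n (qrw_pow C m e0)) (qrw_pow C l e0)))\<^sup>2 = t n"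
    unfolding eventually_sequentially
  proof (intro exI allI impI)
    fix n assume n: "n \<ge> l + 1"
    have "qrw_pow C n (qrw_pow C m e0) = qrw_pow C l (qrw_pow C (n + m - l) e0)"
      using n by (simp add: pow_add_exp[symmetric])
    then have "ip (qrw_pow C n (qrw_pow C m e0)) (qrw_pow C l e0)
       = ip (qrw_pow C (n + m - l) e0) e0"
    proof -
      have b1: "bnd (2*(n+m-l)) (qrw_pow C (n+m-l) e0)" using pow_bnd[OF e0_bnd] by simp
      have b2: "bnd (2*(n+m-l)) e0" by (rule bnd_mono[OF e0_bnd]) simp
      show ?thesis using pow_isom[OF co b1 b2, of l] \<open>qrw_pow C n (qrw_pow C m e0) = _\<close> by simp
    qed
    then show "(norm (ip (qrw_pow C n (qrw_pow C m e0)) (qrw_pow C l e0)))\<^sup>2 = t n"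
      unfolding t_def amp_ip by simp
  qed
  show ?thesis using summable_cong[OF ev] st by simp
qed

lemma Q1:
  assumes co: "coins C" and H: "summable (\<lambda>n. (norm (amp C e0 (Suc n)))\<^sup>2)"
  shows "inV C f \<Longrightarrow> summable (\<lambda>n. (norm (ip (qrw_pow C n f) (qrw_pow C l e0)))\<^sup>2)"
proof (induction rule: inV.induct)
  case (base m) then show ?case by (rule base_summ[OF co H])
next
  case (add f g)
  have b: "bnd (0 + 2*l) (qrw_pow C l e0)" by (rule pow_bnd[OF e0_bnd])
  show ?case using sq_add[OF add.IH] by (simp add: pow_add ip_add1[OF b])
next
  case (scale f c)
  have b: "bnd (0 + 2*l) (qrw_pow C l e0)" by (rule pow_bnd[OF e0_bnd])
  show ?case using sq_scale[OF scale.IH, of c] by (simp add: pow_scale ip_scale1[OF b])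
qed

lemma Q:
  assumes co: "coins C" and H: "summable (\<lambda>n. (norm (amp C e0 (Suc n)))\<^sup>2)" and f: "inV C f"
  shows "inV C g \<Longrightarrow> summable (\<lambda>n. (norm (ip (qrw_pow C n f) g))\<^sup>2)"
proof (induction rule: inV.induct)
  case (base m) then show ?case using Q1[OF co H f] by blast
next
  case (add g1 g2)
  have "\<exists>B. bnd B (qrw_pow C n f)" for n using inV_bnd[OF inV_pow[OF f]] by blast
  then have e: "ip (qrw_pow C n f) (\<lambda>k. g1 k + g2 k) = ip (qrw_pow C n f) g1 + ip (qrw_pow C n f) g2" for n
    using ip_add2 by blast
  show ?case using sq_add[OF add.IH] by (simp add: e)
next
  case (scale g c)
  have "\<exists>B. bnd B (qrw_pow C n f)" for n using inV_bnd[OF inV_pow[OF f]] by blast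
  then have e: "ip (qrw_pow C n f) (\<lambda>k. c * g k) = cnj c * ip (qrw_pow C n f) g" for n
    using ip_scale2 by blast
  show ?case using sq_scale[OF scale.IH, of "cnj c"] by (simp add: e)
qed

definition SS :: "(nat \<Rightarrow> nat \<Rightarrow> nat \<Rightarrow> complex) \<Rightarrow> (nat \<Rightarrow> complex) \<Rightarrow> bool" where
  "SS C \<psi> \<longleftrightarrow> (\<exists>N. inV C (qrw_pow C N \<psi>))"

lemma SS_add: assumes "SS C f" "SS C g" shows "SS C (\<lambda>k. f k + g k)"
proof -
  obtain N1 N2 where "inV C (qrw_pow C N1 f)" "inV C (qrw_pow C N2 g)"
    using assms unfolding SS_def by blast
  then have "inV C (qrw_pow C (N2 + N1) f)" "inV C (qrw_pow C (N1 + N2) g)"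
    using inV_pow by (auto simp: pow_add_exp)
  then have "inV C (qrw_pow C (N1 + N2) (\<lambda>k. f k + g k))"
    by (simp add: pow_add inV.add add.commute)
  then show ?thesis unfolding SS_def by blast
qed

lemma SS_scale: "SS C f \<Longrightarrow> SS C (\<lambda>k. c * f k)"
  unfolding SS_def by (auto simp: pow_scale intro: inV.scale)

lemma SS_fwd: "SS C f \<Longrightarrow> SS C (qrw_step C f)"
  unfolding SS_def
proof (elim exE)
  fix N assume "inV C (qrw_pow C N f)"
  then have "inV C (qrw_pow C 1 (qrw_pow C N f))" by (rule inV_pow)
  then have "inV C (qrw_pow C N (qrw_step C f))"
    by (simp add: pow_add_exp[symmetric] pow_Suc' pow_0 del: One_nat_def)
       (metis pow_add_exp pow_Suc' pow_0 add.commute plus_1_eq_Suc)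
  then show "\<exists>N. inV C (qrw_pow C N (qrw_step C f))" by blast
qed

lemma SS_back: "SS C (qrw_step C f) \<Longrightarrow> SS C f"
  unfolding SS_def by (metis pow_Suc')

lemma SS_solve:
  assumes "SS C (\<lambda>k. a * u k + b * v k)" "SS C v" "a \<noteq> 0"
  shows "SS C u"
proof -
  have s1: "SS C (\<lambda>k. (-b) * v k)" using SS_scale[OF assms(2)] .
  have "SS C (\<lambda>k. a * u k)" using SS_add[OF assms(1) s1] by simp
  then have "SS C (\<lambda>k. (1/a) * (a * u k))" by (rule SS_scale)
  then show ?thesis using assms(3) by simp
qed

definition ev :: "nat \<Rightarrow> nat \<Rightarrow> complex" where "ev p k = (if k = p then 1 else 0)"

lemma ev_bnd: "bnd p (ev p)" unfolding bnd_def ev_def by auto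

lemma step_ev: "qrw_step C (ev p) = (\<lambda>k. C (p div 2) 1 (colj p) * ev (Ai p) k + C (p div 2) 2 (colj p) * ev (Bi p) k)"
proof (rule ext)
  fix k
  have "qrw_step C (ev p) k = (\<Sum>j\<le>p. ev p j * qrwU C j k)" by (rule step_sum_bnd[OF ev_bnd])
  also have "(\<lambda>j. ev p j * qrwU C j k) = (\<lambda>j. if j = p then qrwU C p k else 0)"
    by (auto simp: ev_def)
  also have "(\<Sum>j\<le>p. (if j = p then qrwU C p k else 0)) = qrwU C p k" by simp
  also have "\<dots> = C (p div 2) 1 (colj p) * ev (Ai p) k + C (p div 2) 2 (colj p) * ev (Bi p) k"
    using AB_ne[of p] by (auto simp: U_form ev_def)
  finally show "qrw_step C (ev p) k = \<dots>" .
qed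

lemma e0_ev: "e0 = ev 0" unfolding e0_def ev_def by auto

lemma SS_ev_all:
  assumes nt: "nontrivial_coins C"
  shows "\<forall>p\<le>2*i. SS C (ev p)"
proof (induction i)
  case 0
  have "inV C e0" using inV.base[of C 0] by (simp add: pow_0)
  then have "SS C e0" unfolding SS_def by (intro exI[of _ 0]) (simp add: pow_0)
  then show ?case by (simp add: e0_ev)
next
  case (Suc i)
  have Bi1: "Bi (2*i) \<le> 2*i" "Bi (2*i+1) \<le> 2*i" unfolding Bi_def by auto
  have A1: "Ai (2*i) = 2*i+2" "Ai (2*i+1) = 2*i+2" unfolding Ai_def by auto
  have d: "(2*i) div 2 = i" "(2*i+1) div 2 = i" by auto
  have c: "colj (2*i) = 1" "colj (2*i+1) = 2" unfolding colj_def by auto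
  have "SS C (qrw_step C (ev (2*i)))" using Suc SS_fwd by auto
  then have "SS C (\<lambda>k. C i 1 1 * ev (2*i+2) k + C i 2 1 * ev (Bi (2*i)) k)"
    by (simp only: step_ev A1 d c)
  then have s2: "SS C (ev (2*i+2))"
    by (rule SS_solve) (use Suc Bi1 nt in \<open>auto simp: nontrivial_coins_def\<close>)
  have "SS C (\<lambda>k. C i 1 2 * ev (2*i+2) k + C i 2 2 * ev (Bi (2*i+1)) k)"
    by (intro SS_add SS_scale s2) (use Suc Bi1 in auto)
  then have "SS C (qrw_step C (ev (2*i+1)))"
    by (simp only: step_ev A1 d c)
  then have s1: "SS C (ev (2*i+1))" by (rule SS_back)
  show ?case
  proof (intro allI impI)
    fix p assume "p \<le> 2 * Suc i"
    then consider "p \<le> 2*i" | "p = 2*i+1" | "p = 2*i+2" by fastforce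
    then show "SS C (ev p)" using Suc s1 s2 by cases auto
  qed
qed

lemma SS_ev: "nontrivial_coins C \<Longrightarrow> SS C (ev p)"
  using SS_ev_all[of C p] by auto

lemma SS_fin:
  assumes nt: "nontrivial_coins C" and b: "bnd B \<psi>"
  shows "SS C \<psi>"
proof -
  have "SS C (\<lambda>k. \<Sum>p\<le>n. \<psi> p * ev p k)" for n
  proof (induction n)
    case 0 then show ?case using SS_scale[OF SS_ev[OF nt]] by simp
  next
    case (Suc n) then show ?case using SS_add[OF Suc SS_scale[OF SS_ev[OF nt]]] by simp
  qed
  moreover have "(\<lambda>k. \<Sum>p\<le>B. \<psi> p * ev p k) = \<psi>"
  proof
    fix k
    show "(\<Sum>p\<le>B. \<psi> p * ev p k) = \<psi> k"
      using b by (auto simp: ev_def bnd_def if_distrib cong: if_cong)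
  qed
  ultimately show ?thesis by metis
qed

theorem corollary1:
  fixes C :: "nat \<Rightarrow> nat \<Rightarrow> nat \<Rightarrow> complex"
  assumes "coins C" and "nontrivial_coins C"
  shows "(\<forall>\<psi>. local_state \<psi> \<longrightarrow> transient C \<psi>) \<longleftrightarrow> transient C e0"
proof
  assume "\<forall>\<psi>. local_state \<psi> \<longrightarrow> transient C \<psi>"
  moreover have "local_state e0"
  proof -
    have f: "finite {k. e0 k \<noteq> 0}" unfolding e0_def by auto
    have "(\<lambda>k. (norm (e0 k))\<^sup>2) summable_on {0}" by simp
    moreover have "((\<lambda>k. (norm (e0 k))\<^sup>2) summable_on {0}) = ((\<lambda>k. (norm (e0 k))\<^sup>2) summable_on UNIV)"
      by (rule summable_on_cong_neutral) (auto simp: e0_def)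
    moreover have "(\<Sum>\<^sub>\<infinity>k. (norm (e0 k))\<^sup>2) = (\<Sum>k\<in>{0}. (norm (e0 k))\<^sup>2)"
      by (rule infsum_fin) (auto simp: e0_def)
    ultimately show ?thesis using f unfolding local_state_def is_state_def by (simp add: e0_def)
  qed
  ultimately show "transient C e0" by blast
next
  assume te: "transient C e0"
  then have H: "summable (\<lambda>n. (norm (amp C e0 (Suc n)))\<^sup>2)"
    unfolding transient_def recurrent_def by simp
  show "\<forall>\<psi>. local_state \<psi> \<longrightarrow> transient C \<psi>"
  proof (intro allI impI)
    fix \<psi> assume "local_state \<psi>"
    then have "finite {k. \<psi> k \<noteq> 0}" unfolding local_state_def by simp
    then obtain B where "\<forall>k\<in>{k. \<psi> k \<noteq> 0}. k \<le> B" using finite_nat_set_iff_bounded_le by blast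
    then have b: "bnd B \<psi>" unfolding bnd_def by force
    obtain N where phi: "inV C (qrw_pow C N \<psi>)" using SS_fin[OF assms(2) b] unfolding SS_def by blast
    define \<phi> where "\<phi> = qrw_pow C N \<psi>"
    have eq: "amp C \<psi> n = ip (qrw_pow C n \<phi>) \<phi>" for n
    proof -
      have b1: "bnd (B + 2*n) (qrw_pow C n \<psi>)" by (rule pow_bnd[OF b])
      have b2: "bnd (B + 2*n) \<psi>" by (rule bnd_mono[OF b]) simp
      have "amp C \<psi> n = ip (qrw_pow C N (qrw_pow C n \<psi>)) (qrw_pow C N \<psi>)"
        unfolding amp_ip by (rule pow_isom[OF assms(1) b1 b2, symmetric])
      also have "qrw_pow C N (qrw_pow C n \<psi>) = qrw_pow C n \<phi>"
        unfolding \<phi>_def by (simp add: pow_add_exp[symmetric] add.commute)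
      finally show ?thesis unfolding \<phi>_def by simp
    qed
    have "summable (\<lambda>n. (norm (ip (qrw_pow C n \<phi>) \<phi>))\<^sup>2)"
      using Q[OF assms(1) H phi phi] unfolding \<phi>_def .
    then have "summable (\<lambda>n. (norm (amp C \<psi> n))\<^sup>2)" by (simp add: eq)
    then have "summable (\<lambda>n. (norm (amp C \<psi> (Suc n)))\<^sup>2)"
      by (rule summable_Suc_iff[THEN iffD2])
    then show "transient C \<psi>" unfolding transient_def recurrent_def by simp
  qed
qed

end
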